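(* Every finite solvable group has the $E1$-property.
   Context: For a finite group $G$, a finite-dimensional $\mathbb{R}G$-module $V$ with representation $\rho\colon G\to\mathrm{GL}(V)$, and $n\in\mathrm{GL}(V)$ of finite order normalizing $\rho(G)$, the triple $(G,V,n)$ has the $E1$-property if there is $g\in G$ such that $\rho(g)n$ has eigenvalue $1$. The pair $(G,V)$ has the $E1$-property if $(G,V,n')$ has the $E1$-property for every $n'\in\mathrm{GL}(V)$ of finite order normalizing $\rho(G)$. The group $G$ has the $E1$-property if $(G,V')$ has the $E1$-property for every irreducible, non-trivial $\mathbb{R}G$-module $V'$ of odd dimension. *)

theory Defs
  imports "HOL-Analysis.Analysis" "HOL-Algebra.Solvable_Groups"
begin

definition real_rep :: "('a, 'b) monoid_scheme \<Rightarrow> ('a \<Rightarrow> real^'n^'n) \<Rightarrow> bool" where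
  "real_rep G \<rho> \<longleftrightarrow>
     (\<forall>g\<in>carrier G. invertible (\<rho> g)) \<and>
     (\<forall>g\<in>carrier G. \<forall>h\<in>carrier G. \<rho> (g \<otimes>\<^bsub>G\<^esub> h) = \<rho> g ** \<rho> h)"

text \<open>Irreducible: V is nonzero (automatic, types are nonempty) and the only
  G-invariant subspaces are 0 and V.\<close>
definition irreducible_rep :: "('a, 'b) monoid_scheme \<Rightarrow> ('a \<Rightarrow> real^'n^'n) \<Rightarrow> bool" where
  "irreducible_rep G \<rho> \<longleftrightarrow>
     (\<forall>W::(real^'n) set. subspace W \<and> (\<forall>g\<in>carrier G. (\<lambda>v. \<rho> g *v v) ` W \<subseteq> W)
        \<longrightarrow> W = {0} \<or> W = UNIV)"

definition nontrivial_rep :: "('a, 'b) monoid_scheme \<Rightarrow> ('a \<Rightarrow> real^'n^'n) \<Rightarrow> bool" where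
  "nontrivial_rep G \<rho> \<longleftrightarrow> (\<exists>g\<in>carrier G. \<rho> g \<noteq> mat 1)"

definition finite_order_normalizing ::
  "('a, 'b) monoid_scheme \<Rightarrow> ('a \<Rightarrow> real^'n^'n) \<Rightarrow> real^'n^'n \<Rightarrow> bool" where
  "finite_order_normalizing G \<rho> N \<longleftrightarrow>
     invertible N \<and> (\<exists>k>0. ((\<lambda>A. N ** A) ^^ k) (mat 1) = mat 1) \<and>
     (\<lambda>A. N ** A ** matrix_inv N) ` (\<rho> ` carrier G) = \<rho> ` carrier G"

definition E1_triple :: "('a, 'b) monoid_scheme \<Rightarrow> ('a \<Rightarrow> real^'n^'n) \<Rightarrow> real^'n^'n \<Rightarrow> bool" where
  "E1_triple G \<rho> N \<longleftrightarrow> (\<exists>g\<in>carrier G. \<exists>v. v \<noteq> 0 \<and> (\<rho> g ** N) *v v = v)"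

definition E1_pair :: "('a, 'b) monoid_scheme \<Rightarrow> ('a \<Rightarrow> real^'n^'n) \<Rightarrow> bool" where
  "E1_pair G \<rho> \<longleftrightarrow> (\<forall>N. finite_order_normalizing G \<rho> N \<longrightarrow> E1_triple G \<rho> N)"

end

theory Submission imports Defs begin

type_synonym 'n M = "real^'n^'n"

lemma mm_ldist: "((A::('n::finite) M) + B) ** C = A ** C + B ** C"
  by (simp add: matrix_matrix_mult_def vec_eq_iff sum.distrib algebra_simps)
lemma mm_rdist: "(C::('n::finite) M) ** (A + B) = C ** A + C ** B"
  by (rule matrix_add_ldistrib)
lemma mm_ldiff: "((A::('n::finite) M) - B) ** C = A ** C - B ** C"
  by (simp add: matrix_matrix_mult_def vec_eq_iff sum_subtractf algebra_simps)
lemma mm_rdiff: "(C::('n::finite) M) ** (A - B) = C ** A - C ** B"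
  by (simp add: matrix_matrix_mult_def vec_eq_iff sum_subtractf algebra_simps)
lemma mm_lneg: "(- A::('n::finite) M) ** C = - (A ** C)"
  by (simp add: matrix_matrix_mult_def vec_eq_iff sum_negf)
lemma mm_rneg: "(C::('n::finite) M) ** (- A) = - (C ** A)"
  by (simp add: matrix_matrix_mult_def vec_eq_iff sum_negf)
lemma mm_lzero: "(0::('n::finite) M) ** C = 0"
  by (simp add: matrix_matrix_mult_def vec_eq_iff)
lemma mm_rzero: "(C::('n::finite) M) ** 0 = 0"
  by (simp add: matrix_matrix_mult_def vec_eq_iff)
lemma mm_lscale: "(c *\<^sub>R A::('n::finite) M) ** C = c *\<^sub>R (A ** C)"
  by (simp add: scalar_matrix_assoc)
lemma mm_rscale: "(C::('n::finite) M) ** (c *\<^sub>R A) = c *\<^sub>R (C ** A)"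
  by (simp add: matrix_scalar_ac scalar_matrix_assoc)
lemma mm_lsum: "(sum f S :: ('n::finite) M) ** C = (\<Sum>x\<in>S. f x ** C)"
  by (induction S rule: infinite_finite_induct) (auto simp: mm_lzero mm_ldist)
lemma mm_rsum: "(C::('n::finite) M) ** sum f S = (\<Sum>x\<in>S. C ** f x)"
  by (induction S rule: infinite_finite_induct) (auto simp: mm_rzero mm_rdist)

lemmas mm_simps = mm_ldist mm_rdist mm_ldiff mm_rdiff mm_lneg mm_rneg mm_lzero mm_rzero
  mm_lscale mm_rscale matrix_mul_assoc matrix_mul_lid matrix_mul_rid

lemma det_neg: "det (- A :: ('n::finite) M) = (-1) ^ CARD('n) * det A"
proof -
  have "- A = (\<chi> i. (-1) *s (\<chi> i. A $ i) $ i)"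
    by (simp add: vec_eq_iff)
  then have "det (- A) = prod (\<lambda>i. -1) (UNIV::'n set) * det ((\<chi> i. A $ i)::('n::finite) M)"
    using det_rows_mul[of "\<lambda>i. -1" "\<lambda>i. A $ i"] by simp
  then show ?thesis by (simp add: vec_lambda_eta)
qed

lemma minv: "invertible (A::('n::finite) M) \<Longrightarrow> A ** matrix_inv A = mat 1 \<and> matrix_inv A ** A = mat 1"
  unfolding invertible_def matrix_inv_def by (rule someI_ex)

lemma det_ne0_ker: "det (A::('n::finite) M) = 0 \<Longrightarrow> \<exists>v. v \<noteq> 0 \<and> A *v v = 0"
  by (metis invertible_det_nz invertible_left_inverse matrix_left_invertible_ker)

definition mpow :: "('n::finite) M \<Rightarrow> nat \<Rightarrow> ('n::finite) M" where "mpow A k = ((\<lambda>B. A ** B) ^^ k) (mat 1)"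

lemma mpow_0[simp]: "mpow A 0 = mat 1" by (simp add: mpow_def)
lemma mpow_Suc: "mpow A (Suc k) = A ** mpow A k" by (simp add: mpow_def)
lemma mpow_add: "mpow A (j + k) = mpow A j ** mpow A k"
  by (induction j) (auto simp: mpow_Suc matrix_mul_assoc)
lemma mpow_Suc': "mpow A (Suc k) = mpow A k ** A"
  using mpow_add[of A k 1] by (simp add: mpow_Suc)
lemma mpow_mult: "mpow A (j * k) = mpow (mpow A j) k"
  by (induction k) (auto simp: mpow_Suc mpow_add)
lemma mpow_one[simp]: "mpow (mat 1) j = mat 1"
  by (induction j) (auto simp: mpow_Suc)
lemma det_mpow: "det (mpow A k) = det A ^ k"
  by (induction k) (auto simp: mpow_Suc det_mul det_I)

lemma transpose_diff: "transpose ((A::('n::finite) M) - B) = transpose A - transpose B"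
  by (simp add: transpose_def vec_eq_iff)

lemma mv_lsum: "(sum f S :: ('n::finite) M) *v x = (\<Sum>i\<in>S. f i *v x)"
  by (induction S rule: infinite_finite_induct) (auto simp: matrix_vector_mult_add_rdistrib)

lemma mv_lscale: "(c *\<^sub>R (A::('n::finite) M)) *v v = c *\<^sub>R (A *v v)"
  by (simp add: matrix_vector_mult_def vec_eq_iff sum_distrib_left algebra_simps)

lemma dot_tr: "x \<bullet> (transpose (B::('n::finite) M) *v (B *v x)) = (B *v x) \<bullet> (B *v x)"
  by (metis dot_lmul_matrix inner_commute transpose_matrix_vector)

lemma finite_order_det:
  fixes M :: "('n::finite) M"
  assumes "mpow M k = mat 1" "k > 0"
  shows "det (M - mat 1) = (-1)^CARD('n) * det M * det (M - mat 1)"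
proof -
  define S where "S = (\<Sum>j<k. transpose (mpow M j) ** mpow M j)"
  define f where "f j = transpose (mpow M j) ** mpow M j" for j
  have "transpose M ** S ** M = (\<Sum>j<k. f (Suc j))"
    unfolding S_def f_def
    by (simp add: mm_lsum mm_rsum mpow_Suc' matrix_transpose_mul matrix_mul_assoc)
  also have "\<dots> = S"
  proof -
    have "(\<Sum>j<Suc k. f j) = f 0 + (\<Sum>j<k. f (Suc j))" by (rule sum.lessThan_Suc_shift)
    moreover have "(\<Sum>j<Suc k. f j) = (\<Sum>j<k. f j) + f k" by simp
    moreover have "f k = f 0" using assms by (simp add: f_def)
    ultimately show ?thesis by (simp add: S_def f_def[symmetric] add.commute)
  qed
  finally have inv: "transpose M ** S ** M = S" .
  have Sinj: "x = 0" if "S *v x = 0" for x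
  proof -
    have "x \<bullet> (S *v x) = (\<Sum>j<k. (mpow M j *v x) \<bullet> (mpow M j *v x))"
      unfolding S_def
      by (simp add: mv_lsum inner_sum_right dot_tr[symmetric] matrix_vector_mul_assoc[symmetric])
    then have "(\<Sum>j<k. (mpow M j *v x) \<bullet> (mpow M j *v x)) = 0" using that by simp
    then have "\<forall>j\<in>{..<k}. (mpow M j *v x) \<bullet> (mpow M j *v x) = 0"
      by (subst (asm) sum_nonneg_eq_0_iff) auto
    then show "x = 0" using assms(2) by (metis inner_eq_zero_iff lessThan_iff matrix_vector_mul_lid mpow_0)
  qed
  have dS: "det S \<noteq> 0"
    by (metis Sinj invertible_det_nz invertible_left_inverse matrix_left_invertible_ker)
  have "det S * det (M - mat 1) = det (S ** M - S)"
    by (simp add: det_mul[symmetric] mm_simps)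
  also have "S ** M - S = (mat 1 - transpose M) ** S ** M"
    by (simp add: mm_simps inv)
  also have "det \<dots> = det (mat 1 - M) * det S * det M"
    by (simp add: det_mul det_transpose[symmetric, of "mat 1 - M"] transpose_diff)
  finally have e: "det S * det (M - mat 1) = det (mat 1 - M) * det S * det M" .
  have "det (mat 1 - M) = (-1)^CARD('n) * det (M - mat 1)"
    by (metis det_neg minus_diff_eq)
  with e dS show ?thesis by (simp add: algebra_simps)
qed

lemma vec_self_neg: "(w::real^'n::finite) = - w \<Longrightarrow> w = 0"
  by (simp add: vec_eq_iff)

lemma idem_assoc: "(P::('n::finite) M) ** P = P \<Longrightarrow> X ** P ** P = X ** P"
  by (metis matrix_mul_assoc)

lemma mpow_comm: "(T::('n::finite) M) ** P = P ** T \<Longrightarrow> mpow T j ** P = P ** mpow T j"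
  by (induction j) (auto simp: mpow_Suc, metis matrix_mul_assoc)

lemma block_pow:
  fixes T P :: "('n::finite) M"
  assumes PP: "P ** P = P" and TP: "T ** P = P ** T"
  shows "mpow (T ** P + c *\<^sub>R (mat 1 - P)) j = mpow T j ** P + (c^j) *\<^sub>R (mat 1 - P)"
proof (induction j)
  case 0 then show ?case by (simp add: algebra_simps)
next
  case (Suc j)
  have c: "mpow T j ** P = P ** mpow T j" by (rule mpow_comm[OF TP])
  have PP': "X ** P ** P = X ** P" for X by (metis PP matrix_mul_assoc)
  have "T ** P ** (mpow T j ** P) = mpow T (Suc j) ** P"
    by (metis PP c matrix_mul_assoc mpow_Suc)
  moreover have "T ** P ** (mat 1 - P) = 0" by (simp add: mm_simps PP PP')
  moreover have "(mat 1 - P) ** (mpow T j ** P) = 0"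
    by (simp add: mm_simps PP c flip: matrix_mul_assoc) (simp add: matrix_mul_assoc PP)
  moreover have "(mat 1 - P) ** (mat 1 - P) = mat 1 - P" by (simp add: mm_simps PP)
  ultimately show ?case using Suc
    by (simp add: mpow_Suc mm_ldist mm_rdist mm_lscale mm_rscale mult.commute)
qed

lemma fix_from_det:
  fixes T P :: "('n::finite) M"
  assumes PP: "P ** P = P" and TP: "T ** P = P ** T"
    and d: "det ((T ** P - (mat 1 - P)) - mat 1) = 0"
  shows "\<exists>v. v \<noteq> 0 \<and> T *v v = v \<and> P *v v = v"
proof -
  obtain v where v: "v \<noteq> 0" "(T ** P - (mat 1 - P) - mat 1) *v v = 0"
    using det_ne0_ker[OF d] by blast
  let ?M = "T ** P - (mat 1 - P)"
  have "?M *v v - mat 1 *v v = 0" using v(2) by (simp only: matrix_vector_mult_diff_rdistrib)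
  then have Mv: "?M *v v = v" by simp
  have a1: "P ** (mat 1 - P) = 0" by (simp add: mm_simps PP)
  have a2: "P ** (T ** P) = T ** P" by (metis PP TP matrix_mul_assoc)
  have "P ** ?M = T ** P" by (simp only: mm_rdiff[of P "T ** P"] a1 a2) simp
  then have Pv: "P *v v = T *v (P *v v)"
    by (metis Mv matrix_vector_mul_assoc)
  have b1: "(mat 1 - P) ** (T ** P) = 0"
    by (metis (no_types) PP TP diff_self matrix_mul_assoc matrix_mul_lid mm_ldiff)
  have b2: "(mat 1 - P) ** (mat 1 - P) = mat 1 - P" by (simp add: mm_simps PP)
  have "(mat 1 - P) ** ?M = - (mat 1 - P)"
    by (simp only: mm_rdiff[of "mat 1 - P" "T ** P"] b1 b2) simp
  then have "(mat 1 - P) *v v = - ((mat 1 - P) *v v)"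
    by (metis Mv matrix_vector_mul_assoc matrix_vector_mult_diff_rdistrib
        matrix_vector_mul_lid minus_diff_eq)
  then have "(mat 1 - P) *v v = 0" by (rule vec_self_neg)
  then have "P *v v = v" by (simp add: matrix_vector_mult_diff_rdistrib)
  with Pv v show ?thesis by auto
qed

lemma odd_det_one: "odd CARD('n::finite) \<Longrightarrow> mpow (M::'n M) k = mat 1 \<Longrightarrow> k > 0 \<Longrightarrow>
    det (M - mat 1) \<noteq> 0 \<Longrightarrow> det M = -1"
proof -
  assume a: "odd CARD('n)" "mpow M k = mat 1" "k > 0" "det (M - mat 1) \<noteq> 0"
  then have "det (M - mat 1) = - (det M * det (M - mat 1))" using finite_order_det[of M k] by simp
  then have "det (M - mat 1) * (1 + det M) = 0" by (simp add: algebra_simps)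
  with a(4) show ?thesis by simp
qed

lemma key_final:
  fixes T P a0 :: "('n::finite) M"
  assumes odd: "odd CARD('n)" and PP: "P ** P = P" and TP: "T ** P = P ** T"
    and Tk: "mpow T k = mat 1" "k > 0" and dP: "det (mat 1 - 2 *\<^sub>R P) = -1"
    and a0P: "a0 ** P = - P" "P ** a0 = - P"
    and T2k: "mpow (a0 ** T) k' = mat 1" "k' > 0"
  shows "\<exists>v. v \<noteq> 0 \<and> (T *v v = v \<or> (a0 ** T) *v v = v)"
proof (rule ccontr)
  assume nf: "\<not> ?thesis"
  let ?T2 = "a0 ** T"
  have T2P: "?T2 ** P = P ** ?T2"
    by (metis TP a0P matrix_mul_assoc mm_lneg mm_rneg)
  let ?M1 = "T ** P - (mat 1 - P)"
  let ?M2 = "?T2 ** P - (mat 1 - P)"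
  have d1: "det (?M1 - mat 1) \<noteq> 0" using fix_from_det[OF PP TP] nf by blast
  have d2: "det (?M2 - mat 1) \<noteq> 0" using fix_from_det[OF PP T2P] nf by blast
  have M1eq: "?M1 = T ** P + (-1) *\<^sub>R (mat 1 - P)" by simp
  have M2eq: "?M2 = ?T2 ** P + (-1) *\<^sub>R (mat 1 - P)" by simp
  have p1: "mpow ?M1 (k * 2) = mat 1"
    unfolding M1eq mpow_mult[symmetric] block_pow[OF PP TP]
    by (simp add: mpow_mult Tk)
  have p2: "mpow ?M2 (k' * 2) = mat 1"
    unfolding M2eq mpow_mult[symmetric] block_pow[OF PP T2P]
    by (simp add: mpow_mult T2k)
  have e1: "det ?M1 = -1" using odd_det_one[OF odd p1 _ d1] Tk by simp
  have e2: "det ?M2 = -1" using odd_det_one[OF odd p2 _ d2] T2k by simp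
  let ?B = "T ** P + (mat 1 - P)"
  have aTP: "a0 ** T ** P = - (T ** P)"
    by (metis TP a0P(1) matrix_mul_assoc mm_lneg)
  have gen: "2 *\<^sub>R x - (x + y) = x - y" for x y :: "'n M"
    using scaleR_2[of x] by (metis add_diff_cancel_left diff_diff_eq2)
  have BP: "?B ** P = T ** P" by (simp add: mm_simps PP idem_assoc[OF PP])
  have "?B ** (2 *\<^sub>R P - mat 1) = 2 *\<^sub>R (?B ** P) - ?B"
    by (simp only: mm_rdiff mm_rscale matrix_mul_rid)
  also have "\<dots> = ?M1" unfolding BP by (rule gen)
  finally have "?B ** (2 *\<^sub>R P - mat 1) = ?M1" .
  then have "det ?M1 = det ?B * det (2 *\<^sub>R P - mat 1)" by (metis det_mul)
  moreover have "det (2 *\<^sub>R P - mat 1) = 1"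
    using det_neg[of "mat 1 - 2 *\<^sub>R P"] dP odd by simp
  moreover have "?M2 = - ?B" by (simp add: aTP)
  then have "det ?M2 = (-1)^CARD('n) * det ?B" by (simp only: det_neg)
  then have "det ?M2 = - det ?B" using odd by simp
  ultimately show False using e1 e2 by simp
qed

lemma refl_mult:
  fixes P Q :: "('n::finite) M"
  assumes "P ** Q = 0"
  shows "(mat 1 - 2 *\<^sub>R P) ** (mat 1 - 2 *\<^sub>R Q) = mat 1 - 2 *\<^sub>R (P + Q)"
  using assms by (simp add: mm_simps algebra_simps)

lemma refl_sq:
  fixes P :: "('n::finite) M"
  assumes "P ** P = P"
  shows "det (mat 1 - 2 *\<^sub>R P) = 1 \<or> det (mat 1 - 2 *\<^sub>R P) = -1"
proof -
  have g: "(x - 2 *\<^sub>R y) - 2 *\<^sub>R (y - 2 *\<^sub>R y) = x" for x y :: "'a::real_vector"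
  proof -
    have "y - 2 *\<^sub>R y = - y" by (simp add: scaleR_2)
    then show ?thesis by simp
  qed
  have "(mat 1 - 2 *\<^sub>R P) ** (mat 1 - 2 *\<^sub>R P) = (mat 1 - 2 *\<^sub>R P) - 2 *\<^sub>R (P - 2 *\<^sub>R P)"
    using assms by (simp only: mm_rdiff mm_ldiff mm_rscale mm_lscale matrix_mul_rid matrix_mul_lid)
  then have "(mat 1 - 2 *\<^sub>R P) ** (mat 1 - 2 *\<^sub>R P) = mat 1" using g by simp
  then have "det (mat 1 - 2 *\<^sub>R P) * det (mat 1 - 2 *\<^sub>R P) = 1"
    by (metis det_I det_mul)
  then show ?thesis by (metis mult_cancel_left mult.right_neutral square_eq_1_iff)
qed

lemma odd_pow_eq_1: "odd q \<Longrightarrow> (t::real) ^ q = 1 \<Longrightarrow> t = 1"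
  by (metis linorder_le_cases linorder_neqE not_one_le_zero odd_pos
    one_less_power order_less_irrefl power_less_one_iff zero_le_odd_power)

lemma sum_shift_cyc: "f k = f 0 \<Longrightarrow> (\<Sum>j<k. f (Suc j)) = (\<Sum>j<k. (f j :: 'a::cancel_comm_monoid_add))"
proof -
  assume a: "f k = f 0"
  have "(\<Sum>j<Suc k. f j) = f 0 + (\<Sum>j<k. f (Suc j))" by (rule sum.lessThan_Suc_shift)
  moreover have "(\<Sum>j<Suc k. f j) = (\<Sum>j<k. f j) + f k" by simp
  ultimately show ?thesis using a by (simp add: add.commute)
qed

definition avg :: "('n::finite) M \<Rightarrow> nat \<Rightarrow> 'n M" where
  "avg x q = (1 / real q) *\<^sub>R (\<Sum>j<q. mpow x j)"

lemma avg_props: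
  fixes x :: "('n::finite) M"
  assumes xq: "mpow x q = mat 1" and q: "q > 0"
  shows "x ** avg x q = avg x q" "avg x q ** x = avg x q" "avg x q ** avg x q = avg x q"
    "\<And>y. y ** x = x ** y \<Longrightarrow> y ** avg x q = avg x q ** y"
    "\<And>v. x *v v = v \<Longrightarrow> avg x q *v v = v"
proof -
  show 1: "x ** avg x q = avg x q"
    unfolding avg_def using sum_shift_cyc[of "mpow x" q] xq
    by (simp add: mm_rscale mm_rsum flip: mpow_Suc)
  show 2: "avg x q ** x = avg x q"
    unfolding avg_def using sum_shift_cyc[of "mpow x" q] xq
    by (simp add: mm_lscale mm_lsum flip: mpow_Suc')
  have 3: "avg x q ** mpow x j = avg x q" for j
    by (induction j) (auto simp: mpow_Suc' matrix_mul_assoc 2)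
  show "avg x q ** avg x q = avg x q"
    using q by (subst (2) avg_def) (simp add: mm_rscale mm_rsum 3 sum_constant_scaleR del: sum_constant)
  show "y ** avg x q = avg x q ** y" if "y ** x = x ** y" for y
  proof -
    have "y ** mpow x j = mpow x j ** y" for j
      by (induction j) (auto simp: mpow_Suc, metis matrix_mul_assoc that)
    then show ?thesis unfolding avg_def by (simp add: mm_rscale mm_lscale mm_rsum mm_lsum)
  qed
  show "avg x q *v v = v" if "x *v v = v" for v
  proof -
    have "mpow x j *v v = v" for j
      by (induction j) (auto simp: mpow_Suc' simp flip: matrix_vector_mul_assoc simp: that)
    then show ?thesis using q unfolding avg_def
      by (simp add: mv_lscale mv_lsum sum_constant_scaleR del: sum_constant)
  qed
qed

lemma odd_step:
  fixes x P :: "('n::finite) M"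
  assumes odd: "odd CARD('n)" and PP: "P ** P = P" and xP: "x ** P = P ** x"
    and oq: "odd q" and xq: "mpow x q = mat 1" and dP: "det (mat 1 - 2 *\<^sub>R P) = -1"
  shows "det (mat 1 - 2 *\<^sub>R (P ** avg x q)) = -1"
proof -
  have q: "q > 0" using oq by (rule odd_pos)
  define Q where "Q = avg x q"
  note av = avg_props[OF xq q, folded Q_def]
  have QQ: "Q ** Q = Q" by (rule av(3))
  have PQ: "P ** Q = Q ** P" using av(4)[of P] xP by simp
  have f1: "P ** Q ** P = P ** Q" by (metis PQ PP matrix_mul_assoc)
  have f2: "P ** Q ** Q = P ** Q" by (metis QQ matrix_mul_assoc)
  have f3: "P ** P ** Q = P ** Q" by (metis PP)
  have f4: "P ** Q ** P ** Q = P ** Q" by (metis f1 f2 matrix_mul_assoc)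
  define R where "R = P - P ** Q"
  have RR: "R ** R = R" unfolding R_def by (simp add: mm_simps PP f1 f2 f3 f4)
  have xQ: "x ** Q = Q ** x" using av(1,2) by simp
  have xR: "x ** R = R ** x" unfolding R_def
    by (simp add: mm_simps xP) (metis xP xQ matrix_mul_assoc)
  have QR: "Q ** R = 0" unfolding R_def
    by (simp add: mm_simps flip: PQ) (metis f2 f3 PQ QQ matrix_mul_assoc)
  define T' where "T' = x ** R + 1 *\<^sub>R (mat 1 - R)"
  have "mpow T' q = mat 1" unfolding T'_def block_pow[OF RR xR] xq by simp
  then have "det T' ^ q = 1" by (metis det_I det_mpow)
  then have dT': "det T' = 1" using oq odd_pow_eq_1 by blast
  define T where "T = x ** R - (mat 1 - R)"
  have Teq: "T = x ** R + (-1) *\<^sub>R (mat 1 - R)" unfolding T_def by simp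
  have "mpow T (q * 2) = mat 1"
    unfolding Teq mpow_mult[symmetric] block_pow[OF RR xR] by (simp add: mpow_mult xq)
  moreover have "det (T - mat 1) \<noteq> 0"
  proof
    assume "det (T - mat 1) = 0"
    then obtain v where v: "v \<noteq> 0" "x *v v = v" "R *v v = v"
      using fix_from_det[OF RR xR] unfolding T_def by blast
    have "Q *v v = v" using av(5) v(2) by blast
    moreover have "Q *v v = 0" by (metis v(3) QR matrix_vector_mul_assoc matrix_vector_mult_0)
    ultimately show False using v(1) by simp
  qed
  ultimately have dT: "det T = -1" using odd_det_one[OF odd] q by simp
  have TR: "T ** R = x ** R" unfolding T_def
    by (simp add: mm_simps RR idem_assoc[OF RR])
  have g: "(a - b) - 2 *\<^sub>R a = - (a + b)" for a b :: "'n M"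
    by (simp add: scaleR_2)
  have "T ** (mat 1 - 2 *\<^sub>R R) = T - 2 *\<^sub>R (T ** R)"
    by (simp only: mm_rdiff mm_rscale matrix_mul_rid)
  also have "\<dots> = - T'" unfolding TR unfolding T_def T'_def by (simp add: g)
  finally have "det T * det (mat 1 - 2 *\<^sub>R R) = (-1)^CARD('n) * det T'"
    by (metis det_mul det_neg)
  then have dR: "det (mat 1 - 2 *\<^sub>R R) = 1" using dT dT' odd by simp
  have "R ** (P ** Q) = 0" unfolding R_def by (simp add: mm_simps f3 f4)
  from refl_mult[OF this] have "(mat 1 - 2 *\<^sub>R R) ** (mat 1 - 2 *\<^sub>R (P ** Q)) = mat 1 - 2 *\<^sub>R P"
    unfolding R_def by simp
  then have "det (mat 1 - 2 *\<^sub>R R) * det (mat 1 - 2 *\<^sub>R (P ** Q)) = -1"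
    using dP by (metis det_mul)
  then show ?thesis using dR Q_def by simp
qed

definition Ep :: "('n::finite) M \<Rightarrow> real \<Rightarrow> 'n M" where
  "Ep a e = (1/2) *\<^sub>R (mat 1 + e *\<^sub>R a)"

lemma Ep_props:
  fixes a :: "('n::finite) M"
  assumes aa: "a ** a = mat 1" and e: "e = 1 \<or> e = -1"
  shows "Ep a e ** Ep a e = Ep a e" "a ** Ep a e = e *\<^sub>R Ep a e" "Ep a e ** a = e *\<^sub>R Ep a e"
    "\<And>b. b ** a = a ** b \<Longrightarrow> b ** Ep a e = Ep a e ** b"
    "\<And>v. a *v v = e *\<^sub>R v \<Longrightarrow> Ep a e *v v = v"
proof -
  have ee: "e * e = 1" using e by auto
  show 2: "a ** Ep a e = e *\<^sub>R Ep a e"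
    unfolding Ep_def using e by (auto simp: mm_simps aa algebra_simps)
  show "Ep a e ** a = e *\<^sub>R Ep a e"
    unfolding Ep_def using e by (auto simp: mm_simps aa algebra_simps)
  show "Ep a e ** Ep a e = Ep a e"
  proof -
    have "Ep a e ** Ep a e = (1/2) *\<^sub>R (Ep a e + e *\<^sub>R (Ep a e ** a))"
      by (subst (2) Ep_def) (simp add: mm_simps)
    also have "Ep a e ** a = e *\<^sub>R Ep a e" 
      unfolding Ep_def using e by (auto simp: mm_simps aa algebra_simps)
    finally show ?thesis using ee by (simp add: scaleR_2[symmetric])
  qed
  show "b ** Ep a e = Ep a e ** b" if "b ** a = a ** b" for b
    unfolding Ep_def using that by (simp add: mm_simps)
  show "Ep a e *v v = v" if "a *v v = e *\<^sub>R v" for v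
    unfolding Ep_def using that ee
    by (simp add: mv_lscale matrix_vector_mult_add_rdistrib scaleR_2[symmetric])
qed

lemma Ep_orth: "(a::('n::finite) M) ** a = mat 1 \<Longrightarrow> Ep a 1 ** Ep a (-1) = 0"
  unfolding Ep_def by (simp add: mm_simps algebra_simps)

lemma Ep_sum: "Ep (a::('n::finite) M) 1 + Ep a (-1) = mat 1"
  unfolding Ep_def by (simp add: algebra_simps scaleR_2[symmetric])

lemma split_step:
  fixes a P :: "('n::finite) M"
  assumes PP: "P ** P = P" and aa: "a ** a = mat 1" and aP: "a ** P = P ** a"
    and dP: "det (mat 1 - 2 *\<^sub>R P) = -1"
  shows "\<exists>e. (e = 1 \<or> e = -1) \<and> det (mat 1 - 2 *\<^sub>R (P ** Ep a e)) = -1"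
proof -
  have c1: "P ** Ep a 1 = Ep a 1 ** P" using Ep_props(4)[OF aa, of 1 P] aP by simp
  have c2: "P ** Ep a (-1) = Ep a (-1) ** P" using Ep_props(4)[OF aa, of "-1" P] aP by simp
  have i1: "P ** Ep a 1 ** (P ** Ep a 1) = P ** Ep a 1"
  proof -
    have "P ** Ep a 1 ** (P ** Ep a 1) = P ** (Ep a 1 ** P) ** Ep a 1" by (simp add: matrix_mul_assoc)
    also have "\<dots> = P ** P ** (Ep a 1 ** Ep a 1)" by (simp only: c1[symmetric]) (simp add: matrix_mul_assoc)
    finally show ?thesis by (simp add: PP Ep_props(1)[OF aa])
  qed
  have i2: "P ** Ep a (-1) ** (P ** Ep a (-1)) = P ** Ep a (-1)"
  proof -
    have "P ** Ep a (-1) ** (P ** Ep a (-1)) = P ** (Ep a (-1) ** P) ** Ep a (-1)" by (simp add: matrix_mul_assoc)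
    also have "\<dots> = P ** P ** (Ep a (-1) ** Ep a (-1))" by (simp only: c2[symmetric]) (simp add: matrix_mul_assoc)
    finally show ?thesis by (simp add: PP Ep_props(1)[OF aa])
  qed
  have o: "P ** Ep a 1 ** (P ** Ep a (-1)) = 0"
  proof -
    have "P ** Ep a 1 ** (P ** Ep a (-1)) = P ** (Ep a 1 ** P) ** Ep a (-1)" by (simp add: matrix_mul_assoc)
    also have "\<dots> = P ** P ** (Ep a 1 ** Ep a (-1))" by (simp only: c1[symmetric]) (simp add: matrix_mul_assoc)
    finally show ?thesis by (simp add: Ep_orth[OF aa] mm_rzero)
  qed
  have "P ** Ep a 1 + P ** Ep a (-1) = P"
    by (simp flip: matrix_add_ldistrib add: Ep_sum)
  then have "(mat 1 - 2 *\<^sub>R (P ** Ep a 1)) ** (mat 1 - 2 *\<^sub>R (P ** Ep a (-1))) = mat 1 - 2 *\<^sub>R P"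
    using refl_mult[OF o] by simp
  then have "det (mat 1 - 2 *\<^sub>R (P ** Ep a 1)) * det (mat 1 - 2 *\<^sub>R (P ** Ep a (-1))) = -1"
    using dP by (metis det_mul)
  moreover note refl_sq[OF i1] refl_sq[OF i2]
  ultimately have "det (mat 1 - 2 *\<^sub>R (P ** Ep a 1)) = -1 \<or> det (mat 1 - 2 *\<^sub>R (P ** Ep a (-1))) = -1"
    by auto
  then show ?thesis by (metis (mono_tags))
qed

lemma det_base: "odd CARD('n::finite) \<Longrightarrow> det (mat 1 - 2 *\<^sub>R (mat 1 :: 'n M)) = -1"
proof -
  assume o: "odd CARD('n)"
  have g: "x - 2 *\<^sub>R x = - (x::'a::real_vector)" for x by (simp add: scaleR_2)
  have "det (mat 1 - 2 *\<^sub>R (mat 1 :: 'n M)) = det (- mat 1 :: 'n M)" by (simp only: g)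
  then show ?thesis using det_neg[of "mat 1 :: 'n M"] o by (simp add: det_I)
qed

lemma nonzero_of_det: "det (mat 1 - 2 *\<^sub>R (P::('n::finite) M)) = -1 \<Longrightarrow> \<exists>w. P *v w \<noteq> 0"
proof (rule ccontr)
  assume d: "det (mat 1 - 2 *\<^sub>R P) = -1" and "\<not> (\<exists>w. P *v w \<noteq> 0)"
  then have "P = 0" by (simp add: matrix_eq)
  then show False using d by (simp add: det_I)
qed

lemma odd_common_fix:
  fixes D :: "('n::finite) M set"
  assumes odd: "odd CARD('n)" and fin: "finite D"
    and comm: "\<And>x y. x \<in> D \<Longrightarrow> y \<in> D \<Longrightarrow> x ** y = y ** x"
    and ord: "\<And>x. x \<in> D \<Longrightarrow> \<exists>q. odd q \<and> mpow x q = mat 1"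
  shows "\<exists>v. v \<noteq> 0 \<and> (\<forall>x\<in>D. x *v v = v)"
proof -
  have "F \<subseteq> D \<Longrightarrow> \<exists>P. P ** P = P \<and> (\<forall>y\<in>D. y ** P = P ** y) \<and>
          det (mat 1 - 2 *\<^sub>R P) = -1 \<and> (\<forall>x\<in>F. x ** P = P)" for F
    using finite_subset[OF _ fin, of F]
  proof (induction F rule: infinite_finite_induct)
    case (infinite F) then show ?case by blast
  next
    case empty then show ?case using det_base[OF odd] by (intro exI[of _ "mat 1"]) auto
  next
    case (insert x F)
    then obtain P where P: "P ** P = P" "\<forall>y\<in>D. y ** P = P ** y"
        "det (mat 1 - 2 *\<^sub>R P) = -1" "\<forall>x\<in>F. x ** P = P" by auto
    have xD: "x \<in> D" using insert by auto
    obtain q where q: "odd q" "mpow x q = mat 1" using ord[OF xD] by blast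
    have q0: "q > 0" using q(1) by (rule odd_pos)
    note av = avg_props[OF q(2) q0]
    let ?Q = "avg x q"
    have PQ: "P ** ?Q = ?Q ** P" using av(4)[of P] P(2) xD by simp
    have yQ: "y ** ?Q = ?Q ** y" if "y \<in> D" for y using av(4)[of y] comm[OF that xD] by simp
    have "P ** ?Q ** (P ** ?Q) = P ** ?Q"
    proof -
      have "P ** ?Q ** (P ** ?Q) = P ** (?Q ** P) ** ?Q" by (simp add: matrix_mul_assoc)
      also have "\<dots> = P ** P ** (?Q ** ?Q)" by (simp only: PQ[symmetric]) (simp add: matrix_mul_assoc)
      finally show ?thesis by (simp add: P(1) av(3))
    qed
    moreover have "\<forall>y\<in>D. y ** (P ** ?Q) = P ** ?Q ** y"
      using P(2) yQ by (metis matrix_mul_assoc)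
    moreover have "det (mat 1 - 2 *\<^sub>R (P ** ?Q)) = -1"
      using odd_step[OF odd P(1) _ q(1) q(2) P(3)] P(2) xD by simp
    moreover have "\<forall>z\<in>insert x F. z ** (P ** ?Q) = P ** ?Q"
    proof
      fix z assume z: "z \<in> insert x F"
      show "z ** (P ** ?Q) = P ** ?Q"
      proof (cases "z = x")
        case True
        have "x ** (P ** ?Q) = P ** (x ** ?Q)" using P(2) xD by (metis matrix_mul_assoc)
        then show ?thesis using True av(1) by simp
      next
        case False
        then have "z ** P = P" using z P(4) by auto
        then show ?thesis by (metis matrix_mul_assoc)
      qed
    qed
    ultimately show ?case by blast
  qed
  then obtain P where P: "det (mat 1 - 2 *\<^sub>R P) = -1" "\<forall>x\<in>D. x ** P = P" by blast
  obtain w where w: "P *v w \<noteq> 0" using nonzero_of_det[OF P(1)] by blast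
  have "\<forall>x\<in>D. x *v (P *v w) = P *v w" using P(2) by (simp add: matrix_vector_mul_assoc)
  with w show ?thesis by blast
qed

lemma two_split:
  fixes A :: "('n::finite) M set"
  assumes odd: "odd CARD('n)" and fin: "finite A"
    and comm: "\<And>x y. x \<in> A \<Longrightarrow> y \<in> A \<Longrightarrow> x ** y = y ** x"
    and inv: "\<And>x. x \<in> A \<Longrightarrow> x ** x = mat 1"
  shows "\<exists>P s. P ** P = P \<and> (\<forall>b\<in>A. b ** P = P ** b) \<and> det (mat 1 - 2 *\<^sub>R P) = -1 \<and>
          (\<forall>a\<in>A. (s a = 1 \<or> s a = -1) \<and> a ** P = s a *\<^sub>R P) \<and>
          (\<forall>v. (\<forall>a\<in>A. a *v v = s a *\<^sub>R v) \<longrightarrow> P *v v = v)"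
proof -
  have "F \<subseteq> A \<Longrightarrow> \<exists>P s. P ** P = P \<and> (\<forall>b\<in>A. b ** P = P ** b) \<and> det (mat 1 - 2 *\<^sub>R P) = -1 \<and>
          (\<forall>a\<in>F. (s a = 1 \<or> s a = -1) \<and> a ** P = s a *\<^sub>R P) \<and>
          (\<forall>v. (\<forall>a\<in>F. a *v v = s a *\<^sub>R v) \<longrightarrow> P *v v = v)" for F
    using finite_subset[OF _ fin, of F]
  proof (induction F rule: infinite_finite_induct)
    case (infinite F) then show ?case by blast
  next
    case empty then show ?case using det_base[OF odd] by (intro exI[of _ "mat 1"]) auto
  next
    case (insert a F)
    then obtain P s where P: "P ** P = P" "\<forall>b\<in>A. b ** P = P ** b" "det (mat 1 - 2 *\<^sub>R P) = -1"
          "\<forall>a\<in>F. (s a = 1 \<or> s a = -1) \<and> a ** P = s a *\<^sub>R P"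
          "\<forall>v. (\<forall>a\<in>F. a *v v = s a *\<^sub>R v) \<longrightarrow> P *v v = v" by auto
    have aA: "a \<in> A" using insert by auto
    have aa: "a ** a = mat 1" using inv[OF aA] .
    obtain e where e: "e = 1 \<or> e = -1" "det (mat 1 - 2 *\<^sub>R (P ** Ep a e)) = -1"
      using split_step[OF P(1) aa _ P(3)] P(2) aA by blast
    let ?E = "Ep a e"
    note ep = Ep_props[OF aa e(1)]
    have PE: "P ** ?E = ?E ** P" using ep(4)[of P] P(2) aA by simp
    have bE: "b ** ?E = ?E ** b" if "b \<in> A" for b using ep(4)[of b] comm[OF that aA] by simp
    define s' where "s' = s(a := e)"
    have "P ** ?E ** (P ** ?E) = P ** ?E"
    proof -
      have "P ** ?E ** (P ** ?E) = P ** (?E ** P) ** ?E" by (simp add: matrix_mul_assoc)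
      also have "\<dots> = P ** P ** (?E ** ?E)" by (simp only: PE[symmetric]) (simp add: matrix_mul_assoc)
      finally show ?thesis by (simp add: P(1) ep(1))
    qed
    moreover have "\<forall>b\<in>A. b ** (P ** ?E) = P ** ?E ** b"
      using P(2) bE by (metis matrix_mul_assoc)
    moreover have "\<forall>c\<in>insert a F. (s' c = 1 \<or> s' c = -1) \<and> c ** (P ** ?E) = s' c *\<^sub>R (P ** ?E)"
    proof
      fix c assume c: "c \<in> insert a F"
      show "(s' c = 1 \<or> s' c = -1) \<and> c ** (P ** ?E) = s' c *\<^sub>R (P ** ?E)"
      proof (cases "c = a")
        case True
        have "a ** (P ** ?E) = P ** (a ** ?E)" using P(2) aA by (metis matrix_mul_assoc)
        then show ?thesis using True e(1) ep(2) by (simp add: s'_def mm_rscale)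
      next
        case False
        then have "c \<in> F" using c by auto
        then show ?thesis using False P(4) by (simp add: s'_def matrix_mul_assoc mm_lscale)
      qed
    qed
    moreover have "\<forall>v. (\<forall>c\<in>insert a F. c *v v = s' c *\<^sub>R v) \<longrightarrow> P ** ?E *v v = v"
    proof (intro allI impI)
      fix v assume h: "\<forall>c\<in>insert a F. c *v v = s' c *\<^sub>R v"
      have "\<forall>c\<in>F. c *v v = s c *\<^sub>R v" using h insert.hyps(2) by (auto simp: s'_def)
      then have "P *v v = v" using P(5) by blast
      moreover have "?E *v v = v" using h ep(5) by (simp add: s'_def)
      ultimately show "P ** ?E *v v = v" by (simp flip: matrix_vector_mul_assoc)
    qed
    ultimately show ?case using e(2) by blast
  qed
  then show ?thesis by blast
qed

lemma minv_unique: "(A::('n::finite) M) ** B = mat 1 \<Longrightarrow> matrix_inv A = B"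
proof -
  assume ab: "A ** B = mat 1"
  then have "invertible A" using invertible_right_inverse by blast
  then have "matrix_inv A ** A = mat 1" using minv by blast
  then have "matrix_inv A ** (A ** B) = B" by (simp add: matrix_mul_assoc)
  then show ?thesis using ab by simp
qed

lemma minv_invertible: "invertible (A::('n::finite) M) \<Longrightarrow> invertible (matrix_inv A)"
  using minv invertible_def by blast

lemma minv_minv: "invertible (A::('n::finite) M) \<Longrightarrow> matrix_inv (matrix_inv A) = A"
  using minv minv_unique by blast

lemma minv_mult: "invertible (A::('n::finite) M) \<Longrightarrow> invertible (B::'n M) \<Longrightarrow>
    matrix_inv (A ** B) = matrix_inv B ** matrix_inv A"
  apply (rule minv_unique)
  by (metis (no_types, lifting) matrix_mul_assoc matrix_mul_rid minv)

definition cj :: "('n::finite) M \<Rightarrow> 'n M \<Rightarrow> 'n M" where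
  "cj M X = M ** X ** matrix_inv M"

definition mgroup :: "('n::finite) M set \<Rightarrow> bool" where
  "mgroup S \<longleftrightarrow> (\<forall>x\<in>S. \<forall>y\<in>S. x ** y \<in> S) \<and> mat 1 \<in> S \<and> (\<forall>x\<in>S. invertible x \<and> matrix_inv x \<in> S)"

definition Hg :: "('n::finite) M set \<Rightarrow> ('n M) monoid" where
  "Hg S = \<lparr>carrier = S, mult = (**), one = mat 1\<rparr>"

lemma Hg_group: "mgroup S \<Longrightarrow> group (Hg S)"
  unfolding mgroup_def Hg_def
  apply (rule groupI)
  apply (auto simp: matrix_mul_assoc)
  by (metis minv)

lemma Hg_inv: "mgroup S \<Longrightarrow> x \<in> S \<Longrightarrow> inv\<^bsub>Hg S\<^esub> x = matrix_inv x"
  apply (rule group.inv_equality[OF Hg_group])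
  by (auto simp: Hg_def mgroup_def dest: minv)

lemma cj_hom: "mgroup S \<Longrightarrow> invertible M \<Longrightarrow> cj M ` S = S \<Longrightarrow> group_hom (Hg S) (Hg S) (cj M)"
  unfolding group_hom_def group_hom_axioms_def
  apply (intro conjI Hg_group, assumption, assumption)
  unfolding hom_def Hg_def cj_def
  apply (auto simp: matrix_mul_assoc)
  by (metis matrix_mul_assoc matrix_mul_rid minv)

lemma cj_derived: "mgroup S \<Longrightarrow> invertible M \<Longrightarrow> cj M ` S = S \<Longrightarrow>
    cj M ` ((derived (Hg S) ^^ j) S) = (derived (Hg S) ^^ j) S"
  using group_hom.exp_of_derived_img[OF cj_hom, of S M S j] by (simp add: Hg_def)

lemma invertible_I: "invertible (mat 1 :: ('n::finite) M)"
  unfolding invertible_def by (intro exI[of _ "mat 1"]) simp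

lemma mpow_invertible: "invertible (M::('n::finite) M) \<Longrightarrow> invertible (mpow M i)"
  by (induction i) (auto simp: mpow_Suc invertible_I invertible_mult)

lemma fin_order:
  fixes M :: "('n::finite) M"
  assumes fin: "finite S" and inv: "invertible M" and cl: "\<And>X. X \<in> S \<Longrightarrow> M ** X \<in> S"
    and one: "mat 1 \<in> S"
  shows "\<exists>k>0. mpow M k = mat 1"
proof -
  have "mpow M i \<in> S" for i by (induction i) (auto simp: mpow_Suc one cl)
  then have "range (mpow M) \<subseteq> S" by auto
  then have "finite (range (mpow M))" using fin finite_subset by blast
  then have "\<not> inj (mpow M)" using finite_imageD by fastforce
  then obtain i j where ij: "i \<noteq> j" "mpow M i = mpow M j" unfolding inj_def by blast
  have "\<exists>i j. i < j \<and> mpow M i = mpow M j"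
    using ij by (metis linorder_neqE_nat)
  then obtain i j where ij: "i < j" "mpow M i = mpow M j" by blast
  have "mpow M j = mpow M i ** mpow M (j - i)" using ij(1) by (simp flip: mpow_add)
  then have "matrix_inv (mpow M i) ** mpow M i = matrix_inv (mpow M i) ** (mpow M i ** mpow M (j - i))"
    using ij(2) by simp
  then have "mpow M (j - i) = mat 1"
    using minv[OF mpow_invertible[OF inv, of i]] by (simp add: matrix_mul_assoc)
  then show ?thesis using ij(1) by (intro exI[of _ "j - i"]) simp
qed

lemma rcancel: "invertible (h::('n::finite) M) \<Longrightarrow> X ** h ** matrix_inv h = X"
  using minv[of h] by (simp flip: matrix_mul_assoc)
lemma rcancel': "invertible (h::('n::finite) M) \<Longrightarrow> X ** matrix_inv h ** h = X"
  using minv[of h] by (simp flip: matrix_mul_assoc)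

lemma comm_from_commutator:
  fixes x y :: "('n::finite) M"
  assumes ix: "invertible x" and iy: "invertible y" and c: "x ** y ** matrix_inv x ** matrix_inv y = mat 1"
  shows "x ** y = y ** x"
proof -
  have a: "x ** y ** matrix_inv x ** matrix_inv y ** y = y" using c by simp
  have b: "x ** y ** matrix_inv x ** matrix_inv y ** y = x ** y ** matrix_inv x" by (rule rcancel'[OF iy])
  from a b have e: "x ** y ** matrix_inv x = y" by simp
  have "x ** y ** matrix_inv x ** x = x ** y" by (rule rcancel'[OF ix])
  then show ?thesis using e by simp
qed

lemma pow2_odd: "k > 0 \<Longrightarrow> \<exists>e q. k = 2^e * q \<and> odd (q::nat)"
proof (induction k rule: less_induct)
  case (less k)
  show ?case
  proof (cases "even k")
    case True
    then obtain m where m: "k = 2 * m" by blast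
    then have "m > 0" "m < k" using less.prems by auto
    then obtain e q where "m = 2^e * q" "odd q" using less.IH by blast
    then show ?thesis using m by (intro exI[of _ "Suc e"] exI[of _ q]) auto
  next
    case False
    then show ?thesis by (intro exI[of _ 0] exI[of _ k]) auto
  qed
qed

locale setting =
  fixes G :: "('a, 'b) monoid_scheme" and \<rho> :: "'a \<Rightarrow> ('n::finite) M" and N :: "'n M"
  assumes grp: "group G" and finG: "finite (carrier G)" and rr: "real_rep G \<rho>"
    and irr: "irreducible_rep G \<rho>" and ntr: "nontrivial_rep G \<rho>" and odd: "odd CARD('n)"
    and fon: "finite_order_normalizing G \<rho> N" and solv: "solvable G"
begin

abbreviation "Hc \<equiv> \<rho> ` carrier G"

lemma rinv: "g \<in> carrier G \<Longrightarrow> invertible (\<rho> g)"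
  using rr unfolding real_rep_def by blast

lemma rmul: "g \<in> carrier G \<Longrightarrow> h \<in> carrier G \<Longrightarrow> \<rho> (g \<otimes>\<^bsub>G\<^esub> h) = \<rho> g ** \<rho> h"
  using rr unfolding real_rep_def by blast

lemma r1: "\<rho> \<one>\<^bsub>G\<^esub> = mat 1"
proof -
  have o: "\<one>\<^bsub>G\<^esub> \<in> carrier G" using group.is_monoid[OF grp] monoid.one_closed by blast
  have "\<rho> \<one>\<^bsub>G\<^esub> = \<rho> \<one>\<^bsub>G\<^esub> ** \<rho> \<one>\<^bsub>G\<^esub>" using rmul[OF o o] grp by (simp add: group.is_monoid monoid.l_one o)
  then have "matrix_inv (\<rho> \<one>\<^bsub>G\<^esub>) ** \<rho> \<one>\<^bsub>G\<^esub> = matrix_inv (\<rho> \<one>\<^bsub>G\<^esub>) ** (\<rho> \<one>\<^bsub>G\<^esub> ** \<rho> \<one>\<^bsub>G\<^esub>)"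
    by simp
  then show ?thesis using minv[OF rinv[OF o]] by (simp add: matrix_mul_assoc)
qed

lemma rminv: "g \<in> carrier G \<Longrightarrow> matrix_inv (\<rho> g) = \<rho> (inv\<^bsub>G\<^esub> g)"
  apply (rule minv_unique)
  using rmul[of g "inv\<^bsub>G\<^esub> g"] r1 grp by (simp add: group.r_inv group.inv_closed)

lemma mg: "mgroup Hc"
proof -
  have 1: "\<forall>x\<in>Hc. \<forall>y\<in>Hc. x ** y \<in> Hc"
  proof (intro ballI)
    fix x y assume "x \<in> Hc" "y \<in> Hc"
    then obtain g h where gh: "g \<in> carrier G" "h \<in> carrier G" "x = \<rho> g" "y = \<rho> h" by auto
    then have "g \<otimes>\<^bsub>G\<^esub> h \<in> carrier G" using monoid.m_closed[OF group.is_monoid[OF grp]] by blast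
    then show "x ** y \<in> Hc" using rmul[OF gh(1,2)] gh(3,4) by (metis image_eqI)
  qed
  have 2: "mat 1 \<in> Hc" using r1 grp by (metis group.is_monoid image_eqI monoid.one_closed)
  have 3: "\<forall>x\<in>Hc. invertible x \<and> matrix_inv x \<in> Hc"
    using rinv rminv grp by (auto simp: group.inv_closed)
  show ?thesis using 1 2 3 unfolding mgroup_def by blast
qed

lemma Hc_mul: "x \<in> Hc \<Longrightarrow> y \<in> Hc \<Longrightarrow> x ** y \<in> Hc" using mg unfolding mgroup_def by blast
lemma Hc_one: "mat 1 \<in> Hc" using mg unfolding mgroup_def by blast
lemma Hc_inv: "x \<in> Hc \<Longrightarrow> invertible x" using mg unfolding mgroup_def by blast
lemma Hc_minv: "x \<in> Hc \<Longrightarrow> matrix_inv x \<in> Hc" using mg unfolding mgroup_def by blast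
lemma finHc: "finite Hc" using finG by simp

lemma Nprops: "invertible N" "cj N ` Hc = Hc" "\<exists>k>0. mpow N k = mat 1"
proof -
  show "invertible N" using fon unfolding finite_order_normalizing_def by blast
  have "(\<lambda>A. N ** A ** matrix_inv N) ` Hc = Hc" using fon unfolding finite_order_normalizing_def by blast
  then show "cj N ` Hc = Hc" unfolding cj_def[abs_def] .
  have "\<exists>k>0. ((\<lambda>A. N ** A) ^^ k) (mat 1) = mat 1" using fon unfolding finite_order_normalizing_def by blast
  then show "\<exists>k>0. mpow N k = mat 1" unfolding mpow_def .
qed

lemma hom: "group_hom G (Hg Hc) \<rho>"
  unfolding group_hom_def group_hom_axioms_def hom_def
  using grp Hg_group[OF mg] rmul by (auto simp: Hg_def)

lemma solvH: "solvable (Hg Hc)"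
  using group_hom.surj_hom_imp_solvable[OF hom] solv by (simp add: Hg_def)

lemma cj_Hc: "h \<in> Hc \<Longrightarrow> cj h ` Hc = Hc"
proof
  assume h: "h \<in> Hc"
  show "cj h ` Hc \<subseteq> Hc" using h Hc_mul Hc_minv by (auto simp: cj_def)
  show "Hc \<subseteq> cj h ` Hc"
  proof
    fix y assume y: "y \<in> Hc"
    have "cj h (matrix_inv h ** y ** h) = y"
      unfolding cj_def using minv[OF Hc_inv[OF h]] rcancel[OF Hc_inv[OF h]]
      by (simp add: matrix_mul_assoc)
    moreover have "matrix_inv h ** y ** h \<in> Hc" using h y Hc_mul Hc_minv by auto
    ultimately show "y \<in> cj h ` Hc" by (metis image_eqI)
  qed
qed


definition "n0 = (LEAST n. (derived (Hg Hc) ^^ n) Hc = {mat 1})"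
definition "D = (derived (Hg Hc) ^^ (n0 - 1)) Hc"

lemma grpH: "group (Hg Hc)" by (rule Hg_group[OF mg])

lemma ex_n: "\<exists>n. (derived (Hg Hc) ^^ n) Hc = {mat 1}"
  using group.solvable_iff_trivial_derived_seq[OF grpH] solvH by (simp add: Hg_def)

lemma n0_prop: "(derived (Hg Hc) ^^ n0) Hc = {mat 1}"
  unfolding n0_def using LeastI_ex[OF ex_n] .

lemma Hc_ne: "Hc \<noteq> {mat 1}"
proof
  assume h: "Hc = {mat 1}"
  obtain g where "g \<in> carrier G" "\<rho> g \<noteq> mat 1" using ntr unfolding nontrivial_rep_def by blast
  then show False using h by blast
qed

lemma n0_pos: "n0 > 0"
  using n0_prop Hc_ne by (cases n0) auto

lemma D_ne: "D \<noteq> {mat 1}"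
proof
  assume "D = {mat 1}"
  then have "n0 \<le> n0 - 1" unfolding n0_def D_def by (rule Least_le)
  then show False using n0_pos by simp
qed

lemma D_der: "derived (Hg Hc) D = {mat 1}"
proof -
  obtain m where m: "n0 = Suc m" using n0_pos gr0_conv_Suc by blast
  have "(derived (Hg Hc) ^^ Suc m) Hc = {mat 1}" using n0_prop m by simp
  then show ?thesis unfolding D_def m by simp
qed

lemma D_sub: "subgroup D (Hg Hc)"
  unfolding D_def
  using group.exp_of_derived_is_subgroup[OF grpH group.subgroup_self[OF grpH]] by (simp add: Hg_def)

lemma D_Hc: "D \<subseteq> Hc" using subgroup.subset[OF D_sub] by (simp add: Hg_def)
lemma D_mul: "x \<in> D \<Longrightarrow> y \<in> D \<Longrightarrow> x ** y \<in> D"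
  using subgroup.m_closed[OF D_sub] by (simp add: Hg_def)
lemma D_one: "mat 1 \<in> D"
  using subgroup.one_closed[OF D_sub] by (simp add: Hg_def)

lemma D_comm: "x \<in> D \<Longrightarrow> y \<in> D \<Longrightarrow> x ** y = y ** x"
proof -
  assume x: "x \<in> D" and y: "y \<in> D"
  have "x \<otimes>\<^bsub>Hg Hc\<^esub> y \<otimes>\<^bsub>Hg Hc\<^esub> inv\<^bsub>Hg Hc\<^esub> x \<otimes>\<^bsub>Hg Hc\<^esub> inv\<^bsub>Hg Hc\<^esub> y \<in> derived_set (Hg Hc) D"
    by (rule UN_I[OF x], rule UN_I[OF y], rule singletonI)
  then have "x \<otimes>\<^bsub>Hg Hc\<^esub> y \<otimes>\<^bsub>Hg Hc\<^esub> inv\<^bsub>Hg Hc\<^esub> x \<otimes>\<^bsub>Hg Hc\<^esub> inv\<^bsub>Hg Hc\<^esub> y \<in> derived (Hg Hc) D"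
    unfolding derived_def by (rule generate.incl)
  moreover have ix: "inv\<^bsub>Hg Hc\<^esub> x = matrix_inv x" using Hg_inv[OF mg, of x] x D_Hc by auto
  moreover have iy: "inv\<^bsub>Hg Hc\<^esub> y = matrix_inv y" using Hg_inv[OF mg, of y] y D_Hc by auto
  moreover have hm: "\<And>a b. a \<otimes>\<^bsub>Hg Hc\<^esub> b = a ** b" by (simp add: Hg_def)
  ultimately have "x ** y ** matrix_inv x ** matrix_inv y \<in> derived (Hg Hc) D" by (simp only: hm ix iy)
  then have "x ** y ** matrix_inv x ** matrix_inv y = mat 1" using D_der by simp
  moreover have hx: "x \<in> Hc" and hy: "y \<in> Hc" using D_Hc x y by auto
  ultimately show ?thesis by (intro comm_from_commutator[OF Hc_inv[OF hx] Hc_inv[OF hy]])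
qed

lemma D_cj: "invertible M \<Longrightarrow> cj M ` Hc = Hc \<Longrightarrow> cj M ` D = D"
  unfolding D_def by (rule cj_derived[OF mg])

lemma D_fin: "finite D" using finite_subset[OF D_Hc finHc] .


lemma mpow_D: "x \<in> D \<Longrightarrow> mpow x j \<in> D"
  by (induction j) (auto simp: mpow_Suc D_one D_mul)

lemma ord_Hc: "x \<in> Hc \<Longrightarrow> \<exists>k>0. mpow x k = mat 1"
  by (rule fin_order[OF finHc Hc_inv]) (auto simp: Hc_mul Hc_one)

lemma fix_inv:
  assumes cl: "\<And>h x. h \<in> Hc \<Longrightarrow> x \<in> X \<Longrightarrow> matrix_inv h ** x ** h \<in> X"
    and v: "v \<noteq> 0" "\<forall>x\<in>X. x *v v = v"
  shows "\<forall>x\<in>X. x = mat 1"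
proof -
  define W where "W = {w. \<forall>x\<in>X. x *v w = w}"
  have sW: "subspace W" unfolding subspace_def W_def
    by (auto simp: matrix_vector_right_distrib matrix_vector_mult_scaleR)
  have iW: "\<forall>g\<in>carrier G. (\<lambda>w. \<rho> g *v w) ` W \<subseteq> W"
  proof (intro ballI subsetI)
    fix g u assume g: "g \<in> carrier G" and u: "u \<in> (\<lambda>w. \<rho> g *v w) ` W"
    then obtain w where w: "w \<in> W" "u = \<rho> g *v w" by auto
    have h: "\<rho> g \<in> Hc" using g by auto
    show "u \<in> W" unfolding W_def
    proof (intro CollectI ballI)
      fix x assume x: "x \<in> X"
      have "matrix_inv (\<rho> g) ** x ** \<rho> g *v w = w" using w(1) cl[OF h x] unfolding W_def by blast
      then have "\<rho> g *v (matrix_inv (\<rho> g) ** x ** \<rho> g *v w) = \<rho> g *v w" by simp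
      then have "(\<rho> g ** matrix_inv (\<rho> g)) ** x ** \<rho> g *v w = \<rho> g *v w"
        by (simp add: matrix_vector_mul_assoc matrix_mul_assoc)
      then show "x *v u = u" using w(2) minv[OF Hc_inv[OF h]] by (simp add: matrix_vector_mul_assoc)
    qed
  qed
  have "W = {0} \<or> W = UNIV" using irr sW iW unfolding irreducible_rep_def by blast
  moreover have "v \<in> W" using v(2) unfolding W_def by blast
  ultimately have "W = UNIV" using v(1) by blast
  then show ?thesis unfolding W_def by (auto simp: matrix_eq)
qed

lemma D_conj: "h \<in> Hc \<Longrightarrow> x \<in> D \<Longrightarrow> matrix_inv h ** x ** h \<in> D"
proof -
  assume h: "h \<in> Hc" and x: "x \<in> D"
  have hi: "matrix_inv h \<in> Hc" using Hc_minv[OF h] .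
  have "cj (matrix_inv h) ` D = D" by (rule D_cj[OF Hc_inv[OF hi] cj_Hc[OF hi]])
  moreover have "cj (matrix_inv h) x = matrix_inv h ** x ** h"
    unfolding cj_def using minv_minv[OF Hc_inv[OF h]] by simp
  ultimately show ?thesis using x by (metis image_eqI)
qed

definition "A = {x \<in> D. x ** x = mat 1}"

lemma D_trivial_if_fixed: "\<exists>v. v \<noteq> 0 \<and> (\<forall>x\<in>D. x *v v = v) \<Longrightarrow> False"
proof -
  assume "\<exists>v. v \<noteq> 0 \<and> (\<forall>x\<in>D. x *v v = v)"
  then obtain v where "v \<noteq> 0" "\<forall>x\<in>D. x *v v = v" by blast
  then have "\<forall>x\<in>D. x = mat 1" using fix_inv[OF D_conj] by blast
  then show False using D_ne D_one by blast
qed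

lemma A_nontriv: "\<exists>a\<in>A. a \<noteq> mat 1"
proof (rule ccontr)
  assume "\<not> ?thesis"
  then have no2: "\<And>y. y \<in> D \<Longrightarrow> y ** y = mat 1 \<Longrightarrow> y = mat 1" unfolding A_def by blast
  have pw: "y \<in> D \<Longrightarrow> mpow y (2 ^ e) = mat 1 \<Longrightarrow> y = mat 1" for e y
  proof (induction e arbitrary: y)
    case 0 then show ?case by (simp add: mpow_Suc)
  next
    case (Suc e)
    have "mpow y (2 ^ Suc e) = mpow (mpow y 2) (2 ^ e)" by (simp add: mpow_mult)
    then have "mpow y 2 = mat 1" using Suc.IH[of "mpow y 2"] Suc.prems mpow_D by simp
    then show ?case using no2[OF Suc.prems(1)] by (simp add: numeral_2_eq_2 mpow_Suc)
  qed
  have oddord: "\<exists>q. odd q \<and> mpow x q = mat 1" if x: "x \<in> D" for x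
  proof -
    obtain k where k: "k > 0" "mpow x k = mat 1" using ord_Hc x D_Hc by blast
    obtain e q where eq: "k = 2 ^ e * q" "odd q"
      using pow2_odd[OF k(1)] by blast
    have "mpow (mpow x q) (2 ^ e) = mat 1" using k(2) eq(1) by (simp add: mpow_mult[symmetric] mult.commute)
    then have "mpow x q = mat 1" using pw mpow_D x by blast
    then show ?thesis using eq(2) by blast
  qed
  have "\<exists>v. v \<noteq> 0 \<and> (\<forall>x\<in>D. x *v v = v)"
    by (rule odd_common_fix[OF odd D_fin D_comm oddord])
  then show False by (rule D_trivial_if_fixed)
qed


lemma A_D: "A \<subseteq> D" unfolding A_def by blast
lemma A_fin: "finite A" using finite_subset[OF A_D D_fin] .
lemma A_Hc: "A \<subseteq> Hc" using A_D D_Hc by (rule subset_trans)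
lemma A_comm: "x \<in> A \<Longrightarrow> y \<in> A \<Longrightarrow> x ** y = y ** x"
proof -
  assume "x \<in> A" "y \<in> A"
  then have "x \<in> D" "y \<in> D" using A_D by auto
  then show ?thesis by (rule D_comm)
qed
lemma A_inv: "x \<in> A \<Longrightarrow> x ** x = mat 1" unfolding A_def by blast
lemma A_one: "mat 1 \<in> A" unfolding A_def using D_one by simp
lemma A_mul: "x \<in> A \<Longrightarrow> y \<in> A \<Longrightarrow> x ** y \<in> A"
proof -
  assume x: "x \<in> A" and y: "y \<in> A"
  have "x ** y ** (x ** y) = x ** (y ** x) ** y" by (simp add: matrix_mul_assoc)
  also have "\<dots> = x ** (x ** y) ** y" by (simp only: A_comm[OF y x])
  also have "\<dots> = x ** x ** (y ** y)" by (simp add: matrix_mul_assoc)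
  finally have "x ** y ** (x ** y) = mat 1" using A_inv[OF x] A_inv[OF y] by simp
  moreover have "x ** y \<in> D" using x y A_D by (intro D_mul) auto
  ultimately show ?thesis unfolding A_def by blast
qed

lemma A_cj: "invertible M \<Longrightarrow> cj M ` D = D \<Longrightarrow> a \<in> A \<Longrightarrow> cj M a \<in> A"
proof -
  assume M: "invertible M" and d: "cj M ` D = D" and a: "a \<in> A"
  have "cj M a \<in> D" using d a A_D by blast
  moreover have "cj M a ** cj M a = mat 1"
  proof -
    have "cj M a ** cj M a = M ** a ** (matrix_inv M ** M) ** a ** matrix_inv M"
      unfolding cj_def by (simp add: matrix_mul_assoc)
    also have "\<dots> = M ** (a ** a) ** matrix_inv M" using minv[OF M] by (simp add: matrix_mul_assoc)
    finally show ?thesis using A_inv[OF a] minv[OF M] by simp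
  qed
  ultimately show ?thesis unfolding A_def by blast
qed

lemma A_conj: "h \<in> Hc \<Longrightarrow> a \<in> A \<Longrightarrow> matrix_inv h ** a ** h \<in> A"
proof -
  assume h: "h \<in> Hc" and a: "a \<in> A"
  have hi: "matrix_inv h \<in> Hc" using Hc_minv[OF h] .
  have "cj (matrix_inv h) a \<in> A"
    by (rule A_cj[OF Hc_inv[OF hi] D_cj[OF Hc_inv[OF hi] cj_Hc[OF hi]] a])
  moreover have "cj (matrix_inv h) a = matrix_inv h ** a ** h"
    unfolding cj_def using minv_minv[OF Hc_inv[OF h]] by simp
  ultimately show ?thesis by simp
qed

lemma T_order: "h \<in> Hc \<Longrightarrow> \<exists>k>0. mpow (h ** N) k = mat 1"
proof -
  assume h: "h \<in> Hc"
  obtain kN where kN: "kN > 0" "mpow N kN = mat 1" using Nprops(3) by blast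
  define S where "S = (\<lambda>(x, j). x ** mpow N j) ` (Hc \<times> {..<kN})"
  have finS: "finite S" unfolding S_def using finHc by simp
  have Nx: "N ** x = cj N x ** N" for x unfolding cj_def by (rule rcancel'[OF Nprops(1), symmetric])
  have cjN: "x \<in> Hc \<Longrightarrow> cj N x \<in> Hc" for x using Nprops(2) by blast
  show ?thesis
  proof (rule fin_order[OF finS invertible_mult[OF Hc_inv[OF h] Nprops(1)]])
    have "mat 1 = (\<lambda>(x, j). x ** mpow N j) (mat 1, 0)" by simp
    moreover have "(mat 1, 0) \<in> Hc \<times> {..<kN}" using Hc_one kN(1) by simp
    ultimately show "mat 1 \<in> S" unfolding S_def by (rule image_eqI)
  next
    fix X assume "X \<in> S"
    then obtain x j where xj: "x \<in> Hc" "j < kN" "X = x ** mpow N j" unfolding S_def by auto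
    have "h ** N ** X = (h ** cj N x) ** mpow N (Suc j)"
    proof -
      have "h ** N ** X = h ** (N ** x) ** mpow N j" unfolding xj(3) by (simp add: matrix_mul_assoc)
      also have "\<dots> = h ** (cj N x ** N) ** mpow N j" by (simp only: Nx[of x])
      also have "\<dots> = (h ** cj N x) ** mpow N (Suc j)" by (simp add: mpow_Suc matrix_mul_assoc)
      finally show ?thesis .
    qed
    moreover have hx: "h ** cj N x \<in> Hc" using Hc_mul[OF h cjN[OF xj(1)]] .
    ultimately show "h ** N ** X \<in> S"
    proof (cases "Suc j < kN")
      case True
      then show ?thesis using \<open>h ** N ** X = _\<close> hx unfolding S_def
        by (auto intro!: image_eqI[where x="(h ** cj N x, Suc j)"])
    next
      case False
      then have "Suc j = kN" using xj(2) by simp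
      then have "h ** N ** X = (h ** cj N x) ** mpow N 0" using \<open>h ** N ** X = _\<close> kN(2) by simp
      then show ?thesis using hx kN(1) unfolding S_def
        by (auto intro!: image_eqI[where x="(h ** cj N x, 0)"])
    qed
  qed
qed


context
  fixes P :: "'n M" and s :: "'n M \<Rightarrow> real"
  assumes PP: "P ** P = P" and Pc: "\<forall>b\<in>A. b ** P = P ** b" and dP: "det (mat 1 - 2 *\<^sub>R P) = -1"
    and sa: "\<forall>a\<in>A. (s a = 1 \<or> s a = -1) \<and> a ** P = s a *\<^sub>R P"
    and mx: "\<forall>v. (\<forall>a\<in>A. a *v v = s a *\<^sub>R v) \<longrightarrow> P *v v = v"
begin

lemma s_pm: "a \<in> A \<Longrightarrow> s a = 1 \<or> s a = -1" using sa by blast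
lemma s_sq: "a \<in> A \<Longrightarrow> s a * s a = 1"
proof -
  assume "a \<in> A"
  then have "s a = 1 \<or> s a = -1" by (rule s_pm)
  then show ?thesis by auto
qed
lemma aP: "a \<in> A \<Longrightarrow> a ** P = s a *\<^sub>R P" using sa by blast
lemma Pa: "a \<in> A \<Longrightarrow> P ** a = s a *\<^sub>R P" using sa Pc by metis

lemma Pw: "\<exists>w. P *v w \<noteq> 0" by (rule nonzero_of_det[OF dP])
lemma Pne: "P \<noteq> 0" using Pw by auto

lemma s_hom: "a \<in> A \<Longrightarrow> b \<in> A \<Longrightarrow> s (a ** b) = s a * s b"
proof -
  assume a: "a \<in> A" and b: "b \<in> A"
  have "s (a ** b) *\<^sub>R P = a ** b ** P" using aP[OF A_mul[OF a b]] by simp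
  also have "\<dots> = a ** (b ** P)" by (simp add: matrix_mul_assoc)
  also have "\<dots> = (s a * s b) *\<^sub>R P" using aP[OF a] aP[OF b] by (simp add: mm_rscale)
  finally show ?thesis using Pne by simp
qed

lemma a0_ex: "\<exists>a0\<in>A. s a0 = -1"
proof (rule ccontr)
  assume "\<not> ?thesis"
  then have s1: "\<forall>a\<in>A. s a = 1" using s_pm by blast
  obtain w where w: "P *v w \<noteq> 0" using Pw by blast
  have "\<forall>a\<in>A. a *v (P *v w) = P *v w" using aP s1 by (simp add: matrix_vector_mul_assoc)
  then have "\<forall>a\<in>A. a = mat 1" using fix_inv[OF A_conj w] by blast
  then show False using A_nontriv by blast
qed

lemma h_ex: "\<exists>h\<in>Hc. P ** (h ** N) ** P \<noteq> 0"
proof (rule ccontr)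
  assume "\<not> ?thesis"
  then have H: "\<forall>h\<in>Hc. P ** (h ** N) ** P = 0" by blast
  obtain w where w: "P *v w \<noteq> 0" using Pw by blast
  define W where "W = {v. \<forall>h\<in>Hc. P ** h *v v = 0}"
  have sW: "subspace W" unfolding subspace_def W_def
    by (auto simp: matrix_vector_right_distrib matrix_vector_mult_scaleR)
  have iW: "\<forall>g\<in>carrier G. (\<lambda>w. \<rho> g *v w) ` W \<subseteq> W"
  proof (intro ballI subsetI)
    fix g u assume g: "g \<in> carrier G" and u: "u \<in> (\<lambda>w. \<rho> g *v w) ` W"
    then obtain v where v: "v \<in> W" "u = \<rho> g *v v" by auto
    show "u \<in> W" unfolding W_def
    proof (intro CollectI ballI)
      fix h assume h: "h \<in> Hc"
      have "h ** \<rho> g \<in> Hc" using Hc_mul[OF h] g by auto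
      then have "P ** (h ** \<rho> g) *v v = 0" using v(1) unfolding W_def by blast
      then show "P ** h *v u = 0" using v(2) by (simp add: matrix_vector_mul_assoc matrix_mul_assoc)
    qed
  qed
  have NPw: "N *v (P *v w) \<in> W" unfolding W_def
  proof (intro CollectI ballI)
    fix h assume h: "h \<in> Hc"
    have "P ** h *v (N *v (P *v w)) = (P ** (h ** N) ** P) *v w"
      by (simp add: matrix_vector_mul_assoc matrix_mul_assoc)
    then show "P ** h *v (N *v (P *v w)) = 0" using H h by simp
  qed
  have "W = {0} \<or> W = UNIV" using irr sW iW unfolding irreducible_rep_def by blast
  then show False
  proof
    assume "W = {0}"
    then have "N *v (P *v w) = 0" using NPw by blast
    then have "matrix_inv N *v (N *v (P *v w)) = 0" by simp
    then have "(matrix_inv N ** N) ** P *v w = 0" by (simp add: matrix_vector_mul_assoc matrix_mul_assoc)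
    then have "P *v w = 0" using minv[OF Nprops(1)] by simp
    then show False using w by simp
  next
    assume "W = UNIV"
    then have "P ** mat 1 *v w = 0" using Hc_one unfolding W_def by blast
    then show False using w by simp
  qed
qed

context
  fixes h assumes hH: "h \<in> Hc" and hX: "P ** (h ** N) ** P \<noteq> 0"
begin

lemma T_inv: "invertible (h ** N)" by (rule invertible_mult[OF Hc_inv[OF hH] Nprops(1)])

lemma cjT_eq: "cj (h ** N) a = cj h (cj N a)"
  unfolding cj_def using minv_mult[OF Hc_inv[OF hH] Nprops(1)] by (simp add: matrix_mul_assoc)

lemma cjT: "a \<in> A \<Longrightarrow> cj (h ** N) a \<in> A"
proof -
  assume a: "a \<in> A"
  have "cj N a \<in> A" by (rule A_cj[OF Nprops(1) D_cj[OF Nprops(1) Nprops(2)] a])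
  then have "cj h (cj N a) \<in> A"
    by (rule A_cj[OF Hc_inv[OF hH] D_cj[OF Hc_inv[OF hH] cj_Hc[OF hH]]])
  then show ?thesis using cjT_eq by simp
qed

lemma cjT_inj: "inj_on (cj (h ** N)) A"
proof (rule inj_onI)
  fix x y assume "cj (h ** N) x = cj (h ** N) y"
  then have "matrix_inv (h ** N) ** cj (h ** N) x ** (h ** N) = matrix_inv (h ** N) ** cj (h ** N) y ** (h ** N)"
    by simp
  moreover have "matrix_inv (h ** N) ** cj (h ** N) z ** (h ** N) = z" for z
  proof -
    have "matrix_inv (h ** N) ** cj (h ** N) z ** (h ** N) =
          (matrix_inv (h ** N) ** (h ** N)) ** z ** (matrix_inv (h ** N) ** (h ** N))"
      unfolding cj_def by (simp add: matrix_mul_assoc)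
    then show ?thesis using minv[OF T_inv] by simp
  qed
  ultimately show "x = y" by simp
qed

lemma cjT_img: "cj (h ** N) ` A = A"
  by (rule endo_inj_surj[OF A_fin _ cjT_inj]) (use cjT in blast)

lemma s_cj: "a \<in> A \<Longrightarrow> s (cj (h ** N) a) = s a"
proof -
  assume a: "a \<in> A"
  let ?T = "h ** N"
  let ?b = "cj ?T a"
  have b: "?b \<in> A" using cjT[OF a] .
  have Ta: "?T ** a = ?b ** ?T" unfolding cj_def by (rule rcancel'[OF T_inv, symmetric])
  have "s a *\<^sub>R (P ** ?T ** P) = P ** ?T ** (a ** P)" using aP[OF a] by (simp add: mm_rscale)
  also have "\<dots> = P ** (?T ** a) ** P" by (simp add: matrix_mul_assoc)
  also have "\<dots> = P ** (?b ** ?T) ** P" by (simp only: Ta)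
  also have "\<dots> = (P ** ?b) ** ?T ** P" by (simp add: matrix_mul_assoc)
  also have "\<dots> = s ?b *\<^sub>R (P ** ?T ** P)" using Pa[OF b] by (simp add: mm_lscale)
  finally show ?thesis using hX by simp
qed

definition "Qs = (\<Sum>a\<in>A. s a *\<^sub>R a)"

lemma QP: "Qs ** P = real (card A) *\<^sub>R P"
proof -
  have "Qs ** P = (\<Sum>a\<in>A. s a *\<^sub>R (a ** P))" unfolding Qs_def by (simp add: mm_lsum mm_lscale)
  also have "\<dots> = (\<Sum>a\<in>A. P)" using aP s_sq by (intro sum.cong) auto
  finally show ?thesis by (simp add: sum_constant_scaleR del: sum_constant)
qed

lemma aQ: "a \<in> A \<Longrightarrow> a ** Qs = s a *\<^sub>R Qs"
proof -
  assume a: "a \<in> A"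
  have inj: "inj_on (\<lambda>b. a ** b) A"
  proof (rule inj_onI)
    fix x y assume "a ** x = a ** y"
    then have "a ** (a ** x) = a ** (a ** y)" by simp
    then show "x = y" using A_inv[OF a] by (simp add: matrix_mul_assoc)
  qed
  have img: "(\<lambda>b. a ** b) ` A = A"
    by (rule endo_inj_surj[OF A_fin _ inj]) (use A_mul a in blast)
  have "Qs = (\<Sum>c\<in>(\<lambda>b. a ** b) ` A. s c *\<^sub>R c)" unfolding Qs_def img ..
  also have "\<dots> = (\<Sum>b\<in>A. s (a ** b) *\<^sub>R (a ** b))" by (simp add: sum.reindex[OF inj])
  also have "\<dots> = (\<Sum>b\<in>A. s a *\<^sub>R (s b *\<^sub>R (a ** b)))" using s_hom a by (intro sum.cong) auto
  also have "\<dots> = s a *\<^sub>R (a ** Qs)" unfolding Qs_def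
    by (simp add: mm_rsum mm_rscale scaleR_sum_right)
  finally have e: "Qs = s a *\<^sub>R (a ** Qs)" .
  have "s a *\<^sub>R Qs = (s a * s a) *\<^sub>R (a ** Qs)" by (subst e) simp
  then show ?thesis using s_sq[OF a] by simp
qed

lemma PQ: "P ** Qs = Qs"
proof -
  have "P *v (Qs *v v) = Qs *v v" for v
  proof -
    have "\<forall>a\<in>A. a *v (Qs *v v) = s a *\<^sub>R (Qs *v v)"
      using aQ by (simp add: matrix_vector_mul_assoc mv_lscale)
    then show ?thesis using mx by blast
  qed
  then show ?thesis by (simp add: matrix_eq matrix_vector_mul_assoc)
qed

lemma QPc: "Qs ** P = P ** Qs"
  unfolding Qs_def using Pc by (simp add: mm_lsum mm_rsum mm_lscale mm_rscale)

lemma Qeq: "Qs = real (card A) *\<^sub>R P"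
  using PQ QPc QP by simp

lemma TQ: "(h ** N) ** Qs ** matrix_inv (h ** N) = Qs"
proof -
  have "(h ** N) ** Qs ** matrix_inv (h ** N) = (\<Sum>a\<in>A. s a *\<^sub>R cj (h ** N) a)"
    unfolding Qs_def cj_def by (simp add: mm_lsum mm_rsum mm_lscale mm_rscale)
  also have "\<dots> = (\<Sum>a\<in>A. s (cj (h ** N) a) *\<^sub>R cj (h ** N) a)" using s_cj by (intro sum.cong) auto
  also have "\<dots> = (\<Sum>b\<in>cj (h ** N) ` A. s b *\<^sub>R b)" by (simp add: sum.reindex[OF cjT_inj])
  also have "\<dots> = Qs" unfolding cjT_img Qs_def ..
  finally show ?thesis .
qed

lemma TP: "(h ** N) ** P = P ** (h ** N)"
proof -
  have cA: "card A > 0" using A_fin A_one card_gt_0_iff by blast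
  have "real (card A) *\<^sub>R ((h ** N) ** P ** matrix_inv (h ** N)) = real (card A) *\<^sub>R P"
    using TQ unfolding Qeq by (simp add: mm_lscale mm_rscale)
  then have e: "(h ** N) ** P ** matrix_inv (h ** N) = P" using cA by simp
  have "(h ** N) ** P ** matrix_inv (h ** N) ** (h ** N) = (h ** N) ** P" by (rule rcancel'[OF T_inv])
  then show ?thesis using e by simp
qed

end


end


lemma main: "E1_triple G \<rho> N"
proof -
  obtain P s where PP: "P ** P = P" and Pc: "\<forall>b\<in>A. b ** P = P ** b"
    and dP: "det (mat 1 - 2 *\<^sub>R P) = -1"
    and sa: "\<forall>a\<in>A. (s a = 1 \<or> s a = -1) \<and> a ** P = s a *\<^sub>R P"
    and mx: "\<forall>v. (\<forall>a\<in>A. a *v v = s a *\<^sub>R v) \<longrightarrow> P *v v = v"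
    using two_split[OF odd A_fin A_comm A_inv] by blast
  obtain a0 where a0: "a0 \<in> A" "s a0 = -1" using a0_ex[OF PP Pc dP sa mx] by blast
  obtain h where h: "h \<in> Hc" "P ** (h ** N) ** P \<noteq> 0" using h_ex[OF PP Pc dP sa mx] by blast
  have TP: "(h ** N) ** P = P ** (h ** N)" by (rule TP[OF PP Pc dP sa mx h(1) h(2)])
  obtain k where k: "k > 0" "mpow (h ** N) k = mat 1" using T_order[OF h(1)] by blast
  have a0h: "a0 ** h \<in> Hc" using Hc_mul[OF _ h(1)] a0 A_Hc by blast
  obtain k' where k': "k' > 0" "mpow (a0 ** h ** N) k' = mat 1" using T_order[OF a0h] by blast
  have "a0 ** P = s a0 *\<^sub>R P" using sa a0(1) by blast
  then have a0P: "a0 ** P = - P" using a0(2) by simp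
  have "a0 ** P = P ** a0" using Pc a0(1) by blast
  then have Pa0: "P ** a0 = - P" using a0P by simp
  have aT: "a0 ** (h ** N) = a0 ** h ** N" by (simp add: matrix_mul_assoc)
  have k'': "mpow (a0 ** (h ** N)) k' = mat 1" using k'(2) aT by simp
  have "\<exists>v. v \<noteq> 0 \<and> ((h ** N) *v v = v \<or> (a0 ** (h ** N)) *v v = v)"
    by (rule key_final[OF odd PP TP k(2) k(1) dP a0P Pa0 k'' k'(1)])
  then obtain v where v: "v \<noteq> 0" "(h ** N) *v v = v \<or> (a0 ** h ** N) *v v = v"
    unfolding aT by blast
  show ?thesis unfolding E1_triple_def
  proof (cases "(h ** N) *v v = v")
    case True
    obtain g where g: "g \<in> carrier G" "h = \<rho> g" using h(1) by blast
    then have "\<rho> g ** N *v v = v" using True by simp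
    then show "\<exists>g\<in>carrier G. \<exists>v. v \<noteq> 0 \<and> \<rho> g ** N *v v = v" using g(1) v(1) by blast
  next
    case False
    then have e: "(a0 ** h ** N) *v v = v" using v(2) by blast
    obtain g where g: "g \<in> carrier G" "a0 ** h = \<rho> g" using a0h by blast
    then have "\<rho> g ** N *v v = v" using e by simp
    then show "\<exists>g\<in>carrier G. \<exists>v. v \<noteq> 0 \<and> \<rho> g ** N *v v = v" using g(1) v(1) by blast
  qed
qed

end

theorem corollary3:
  fixes G :: "('a, 'b) monoid_scheme" and \<rho> :: "'a \<Rightarrow> real^'n^'n"
  assumes "group G" and "finite (carrier G)" and "solvable G"
    and "real_rep G \<rho>" and "irreducible_rep G \<rho>" and "nontrivial_rep G \<rho>"
    and "odd CARD('n)"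
  shows "E1_pair G \<rho>"
  unfolding E1_pair_def
proof (intro allI impI)
  fix N assume fo: "finite_order_normalizing G \<rho> N"
  interpret setting G \<rho> N unfolding setting_def using assms fo by blast
  show "E1_triple G \<rho> N" by (rule main)
qed

end
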